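(* Let $(\mathcal{M},\varphi,\xi,\eta,g)$ be an almost paracontact almost paracomplex Riemannian manifold which is para-Einstein-like with constants $(a,b,c)$ and admits a para-Ricci-like soliton with potential $\xi$ and constants $(\lambda,\mu,\nu)$. Then: (i) $a+b+c=-\lambda-\mu-\nu$; (ii) $\nabla_\xi\xi=0$, i.e. $\xi$ is geodesic; (iii) $(\nabla_\xi\varphi)\xi=0$, $\nabla_\xi\eta=0$, and $\omega=0$; (iv) $(\nabla_\xi\rho)(y,z)=b\,g\big((\nabla_\xi\varphi)y,z\big)$ for all vector fields $y,z$.
   Context: An almost paracontact almost paracomplex Riemannian (apapR) manifold $(\mathcal{M},\varphi,\xi,\eta,g)$ is a smooth $(2n+1)$-dimensional manifold with a $(1,1)$-tensor field $\varphi$, a vector field $\xi$, a 1-form $\eta$ and a Riemannian metric $g$ such that $\varphi\xi=0$, $\varphi^2=I-\eta\otimes\xi$, $\eta\circ\varphi=0$, $\eta(\xi)=1$, $\operatorname{tr}\varphi=0$, $g(\varphi x,\varphi y)=g(x,y)-\eta(x)\eta(y)$. $\nabla$ is the Levi-Civita connection of $g$ and $\rho$ its Ricci tensor. The associated metric is $\tilde g(x,y)=g(x,\varphi y)+\eta(x)\eta(y)$. $F(x,y,z)=g((\nabla_x\varphi)y,z)$ and $\omega(z)=F(\xi,\xi,z)$. The manifold is para-Einstein-like with constants $(a,b,c)$ if $\rho=a\,g+b\,\tilde g+c\,\eta\otimes\eta$. It admits a para-Ricci-like soliton with potential $\xi$ and constants $(\lambda,\mu,\nu)$ if $\rho=-\frac12\mathcal{L}_\xi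 g-\lambda g-\mu\tilde g-\nu\,\eta\otimes\eta$, where $\mathcal L$ is the Lie derivative. *)

theory Defs
  imports "HOL-Analysis.Analysis"
begin

text \<open>Local (chart) model: an open set U of a Euclidean space 'a of dimension 2n+1.
  Vector fields are maps 'a => 'a; tensor fields are given pointwise.\<close>

text \<open>C^k on U, expressed through iterated directional derivatives along constant directions
  (equivalent to the usual C^k for Euclidean domains).\<close>
fun Ck :: "nat \<Rightarrow> 'a::real_normed_vector set \<Rightarrow> ('a \<Rightarrow> 'b::real_normed_vector) \<Rightarrow> bool" where
  "Ck 0 U f = continuous_on U f"
| "Ck (Suc k) U f = ((\<forall>p\<in>U. f differentiable (at p)) \<and>
       (\<forall>v. Ck k U (\<lambda>p. frechet_derivative f (at p) v)))"

definition smooth_on :: "'a::real_normed_vector set \<Rightarrow> ('a \<Rightarrow> 'b::real_normed_vector) \<Rightarrow> bool" where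
  "smooth_on U f \<longleftrightarrow> (\<forall>k. Ck k U f)"

definition vderiv :: "('a::real_normed_vector \<Rightarrow> 'a) \<Rightarrow> ('a \<Rightarrow> 'b::real_normed_vector) \<Rightarrow> 'a \<Rightarrow> 'b" where
  "vderiv X f p = frechet_derivative f (at p) (X p)"

definition lie :: "('a::real_normed_vector \<Rightarrow> 'a) \<Rightarrow> ('a \<Rightarrow> 'a) \<Rightarrow> 'a \<Rightarrow> 'a" where
  "lie X Y p = vderiv X Y p - vderiv Y X p"

definition riem_metric :: "'a::euclidean_space set \<Rightarrow> ('a \<Rightarrow> 'a \<Rightarrow> 'a \<Rightarrow> real) \<Rightarrow> bool" where
  "riem_metric U g \<longleftrightarrow>
     (\<forall>p\<in>U. bilinear (g p) \<and> (\<forall>u v. g p u v = g p v u) \<and> (\<forall>v. v \<noteq> 0 \<longrightarrow> g p v v > 0)) \<and>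
     (\<forall>u v. smooth_on U (\<lambda>p. g p u v))"

definition levi_civita :: "'a::euclidean_space set \<Rightarrow> ('a \<Rightarrow> 'a \<Rightarrow> 'a \<Rightarrow> real)
     \<Rightarrow> (('a \<Rightarrow> 'a) \<Rightarrow> ('a \<Rightarrow> 'a) \<Rightarrow> ('a \<Rightarrow> 'a)) \<Rightarrow> bool" where
  "levi_civita U g nabla \<longleftrightarrow>
     (\<forall>X Y. smooth_on U X \<and> smooth_on U Y \<longrightarrow>
        smooth_on U (nabla X Y) \<and>
        (\<forall>p\<in>U. nabla X Y p - nabla Y X p = lie X Y p) \<and>
        (\<forall>Z. smooth_on U Z \<longrightarrow> (\<forall>p\<in>U.
            vderiv X (\<lambda>q. g q (Y q) (Z q)) p = g p (nabla X Y p) (Z p) + g p (Y p) (nabla X Z p))))"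

definition curv :: "(('a::real_normed_vector \<Rightarrow> 'a) \<Rightarrow> ('a \<Rightarrow> 'a) \<Rightarrow> ('a \<Rightarrow> 'a))
     \<Rightarrow> ('a \<Rightarrow> 'a) \<Rightarrow> ('a \<Rightarrow> 'a) \<Rightarrow> ('a \<Rightarrow> 'a) \<Rightarrow> 'a \<Rightarrow> 'a" where
  "curv nabla X Y Z p = nabla X (nabla Y Z) p - nabla Y (nabla X Z) p - nabla (lie X Y) Z p"

definition ricci :: "(('a::euclidean_space \<Rightarrow> 'a) \<Rightarrow> ('a \<Rightarrow> 'a) \<Rightarrow> ('a \<Rightarrow> 'a))
     \<Rightarrow> ('a \<Rightarrow> 'a) \<Rightarrow> ('a \<Rightarrow> 'a) \<Rightarrow> 'a \<Rightarrow> real" where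
  "ricci nabla Y Z p = (\<Sum>i\<in>Basis. inner (curv nabla (\<lambda>_. i) Y Z p) i)"

definition apapR :: "'a::euclidean_space set \<Rightarrow> ('a \<Rightarrow> 'a \<Rightarrow> 'a) \<Rightarrow> ('a \<Rightarrow> 'a)
     \<Rightarrow> ('a \<Rightarrow> 'a \<Rightarrow> real) \<Rightarrow> ('a \<Rightarrow> 'a \<Rightarrow> 'a \<Rightarrow> real) \<Rightarrow> bool" where
  "apapR U phi xi eta g \<longleftrightarrow>
     open U \<and> U \<noteq> {} \<and> riem_metric U g \<and> smooth_on U xi \<and>
     (\<forall>v. smooth_on U (\<lambda>p. phi p v)) \<and> (\<forall>v. smooth_on U (\<lambda>p. eta p v)) \<and>
     (\<forall>p\<in>U. linear (phi p) \<and> linear (eta p) \<and>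
        phi p (xi p) = 0 \<and>
        (\<forall>v. phi p (phi p v) = v - eta p v *\<^sub>R xi p) \<and>
        (\<forall>v. eta p (phi p v) = 0) \<and>
        eta p (xi p) = 1 \<and>
        (\<Sum>i\<in>Basis. inner (phi p i) i) = 0 \<and>
        (\<forall>u v. g p (phi p u) (phi p v) = g p u v - eta p u * eta p v))"

definition gtilde :: "('a \<Rightarrow> 'a \<Rightarrow> 'a) \<Rightarrow> ('a \<Rightarrow> 'a \<Rightarrow> real) \<Rightarrow> ('a \<Rightarrow> 'a \<Rightarrow> 'a \<Rightarrow> real)
     \<Rightarrow> 'a \<Rightarrow> 'a \<Rightarrow> 'a \<Rightarrow> real" where
  "gtilde phi eta g p u v = g p u (phi p v) + eta p u * eta p v"

definition nabla_phi :: "(('a \<Rightarrow> 'a) \<Rightarrow> ('a \<Rightarrow> 'a) \<Rightarrow> ('a \<Rightarrow> 'a)) \<Rightarrow> ('a \<Rightarrow> 'a \<Rightarrow> 'a::real_vector)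
     \<Rightarrow> ('a \<Rightarrow> 'a) \<Rightarrow> ('a \<Rightarrow> 'a) \<Rightarrow> 'a \<Rightarrow> 'a" where
  "nabla_phi nabla phi X Y p = nabla X (\<lambda>q. phi q (Y q)) p - phi p (nabla X Y p)"

definition nabla_eta :: "(('a \<Rightarrow> 'a) \<Rightarrow> ('a \<Rightarrow> 'a) \<Rightarrow> ('a \<Rightarrow> 'a)) \<Rightarrow> ('a \<Rightarrow> 'a \<Rightarrow> real)
     \<Rightarrow> ('a::real_normed_vector \<Rightarrow> 'a) \<Rightarrow> ('a \<Rightarrow> 'a) \<Rightarrow> 'a \<Rightarrow> real" where
  "nabla_eta nabla eta X Y p = vderiv X (\<lambda>q. eta q (Y q)) p - eta p (nabla X Y p)"

definition Ften :: "(('a \<Rightarrow> 'a) \<Rightarrow> ('a \<Rightarrow> 'a) \<Rightarrow> ('a \<Rightarrow> 'a)) \<Rightarrow> ('a \<Rightarrow> 'a \<Rightarrow> 'a::real_vector)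
     \<Rightarrow> ('a \<Rightarrow> 'a \<Rightarrow> 'a \<Rightarrow> real) \<Rightarrow> ('a \<Rightarrow> 'a) \<Rightarrow> ('a \<Rightarrow> 'a) \<Rightarrow> ('a \<Rightarrow> 'a) \<Rightarrow> 'a \<Rightarrow> real" where
  "Ften nabla phi g X Y Z p = g p (nabla_phi nabla phi X Y p) (Z p)"

definition omega :: "(('a \<Rightarrow> 'a) \<Rightarrow> ('a \<Rightarrow> 'a) \<Rightarrow> ('a \<Rightarrow> 'a)) \<Rightarrow> ('a \<Rightarrow> 'a \<Rightarrow> 'a::real_vector)
     \<Rightarrow> ('a \<Rightarrow> 'a) \<Rightarrow> ('a \<Rightarrow> 'a \<Rightarrow> 'a \<Rightarrow> real) \<Rightarrow> ('a \<Rightarrow> 'a) \<Rightarrow> 'a \<Rightarrow> real" where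
  "omega nabla phi xi g Z p = Ften nabla phi g xi xi Z p"

definition nabla_ricci :: "(('a::euclidean_space \<Rightarrow> 'a) \<Rightarrow> ('a \<Rightarrow> 'a) \<Rightarrow> ('a \<Rightarrow> 'a))
     \<Rightarrow> ('a \<Rightarrow> 'a) \<Rightarrow> ('a \<Rightarrow> 'a) \<Rightarrow> ('a \<Rightarrow> 'a) \<Rightarrow> 'a \<Rightarrow> real" where
  "nabla_ricci nabla X Y Z p =
     vderiv X (ricci nabla Y Z) p - ricci nabla (nabla X Y) Z p - ricci nabla Y (nabla X Z) p"

definition lie_g :: "('a \<Rightarrow> 'a \<Rightarrow> 'a \<Rightarrow> real) \<Rightarrow> ('a::real_normed_vector \<Rightarrow> 'a)
     \<Rightarrow> ('a \<Rightarrow> 'a) \<Rightarrow> ('a \<Rightarrow> 'a) \<Rightarrow> 'a \<Rightarrow> real" where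
  "lie_g g X Y Z p = vderiv X (\<lambda>q. g q (Y q) (Z q)) p - g p (lie X Y p) (Z p) - g p (Y p) (lie X Z p)"

definition para_einstein_like where
  "para_einstein_like U phi xi eta g nabla (a::real) b c \<longleftrightarrow>
     (\<forall>Y Z. smooth_on U Y \<and> smooth_on U Z \<longrightarrow> (\<forall>p\<in>U.
        ricci nabla Y Z p = a * g p (Y p) (Z p) + b * gtilde phi eta g p (Y p) (Z p)
                            + c * eta p (Y p) * eta p (Z p)))"

definition para_ricci_like_soliton where
  "para_ricci_like_soliton U phi xi eta g nabla (lam::real) mu nu \<longleftrightarrow>
     (\<forall>Y Z. smooth_on U Y \<and> smooth_on U Z \<longrightarrow> (\<forall>p\<in>U.
        ricci nabla Y Z p = - (1/2) * lie_g g xi Y Z p - lam * g p (Y p) (Z p)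
                            - mu * gtilde phi eta g p (Y p) (Z p) - nu * eta p (Y p) * eta p (Z p)))"

end

theory Submission
  imports Defs
begin


lemma fd_cong:
  assumes "open U" "p \<in> U" "\<And>q. q \<in> U \<Longrightarrow> f q = h q"
  shows "frechet_derivative f (at p) = frechet_derivative h (at p)"
proof -
  have "\<And>D. (f has_derivative D) (at p) = (h has_derivative D) (at p)"
    using assms by (metis has_derivative_transform_within_open)
  then show ?thesis unfolding frechet_derivative_def by simp
qed

lemma diff_cong:
  assumes "open U" "p \<in> U" "\<And>q. q \<in> U \<Longrightarrow> f q = h q" "f differentiable (at p)"
  shows "h differentiable (at p)"
  using assms unfolding differentiable_def by (metis has_derivative_transform_within_open)

lemma Ck_cong:
  assumes "open U" "\<And>q. q \<in> U \<Longrightarrow> f q = h q" "Ck k U f"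
  shows "Ck k U h"
  using assms(2,3)
proof (induction k arbitrary: f h)
  case 0
  then show ?case using continuous_on_cong by (metis Ck.simps(1))
next
  case (Suc k)
  have d: "\<forall>p\<in>U. h differentiable (at p)"
    using Suc.prems diff_cong[OF assms(1)] by (metis Ck.simps(2))
  have "Ck k U (\<lambda>p. frechet_derivative h (at p) v)" for v
  proof (rule Suc.IH[of "\<lambda>p. frechet_derivative f (at p) v"])
    show "\<And>q. q \<in> U \<Longrightarrow> frechet_derivative f (at q) v = frechet_derivative h (at q) v"
      using fd_cong[OF assms(1)] Suc.prems(1) by metis
    show "Ck k U (\<lambda>p. frechet_derivative f (at p) v)" using Suc.prems by simp
  qed
  then show ?case using d by simp
qed

lemma Ck_const: "Ck k U (\<lambda>_. c)"
proof (induction k arbitrary: c)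
  case 0 then show ?case by simp
next
  case (Suc k)
  have "frechet_derivative (\<lambda>_. c) (at p) = (\<lambda>_. 0)" for p
    by (metis frechet_derivative_at has_derivative_const)
  then show ?case using Suc by simp
qed

lemma Ck_Suc_imp: "Ck (Suc k) U f \<Longrightarrow> Ck k U f"
proof (induction k arbitrary: f)
  case 0
  then show ?case
    by (simp add: continuous_at_imp_continuous_on differentiable_imp_continuous_within)
next
  case (Suc k)
  then show ?case by (metis Ck.simps(2))
qed

lemma Ck_add:
  assumes "open U"
  shows "Ck k U f \<Longrightarrow> Ck k U h \<Longrightarrow> Ck k U (\<lambda>p. f p + h p)"
proof (induction k arbitrary: f h)
  case 0 then show ?case by (simp add: continuous_on_add)
next
  case (Suc k)
  have d: "\<forall>p\<in>U. (\<lambda>p. f p + h p) differentiable (at p)"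
    using Suc.prems by auto
  have "Ck k U (\<lambda>p. frechet_derivative (\<lambda>p. f p + h p) (at p) v)" for v
  proof (rule Ck_cong[OF assms, of "\<lambda>p. frechet_derivative f (at p) v + frechet_derivative h (at p) v"])
    show "Ck k U (\<lambda>p. frechet_derivative f (at p) v + frechet_derivative h (at p) v)"
      using Suc by simp
    fix q assume q: "q \<in> U"
    then have "((\<lambda>p. f p + h p) has_derivative (\<lambda>v. frechet_derivative f (at q) v + frechet_derivative h (at q) v)) (at q)"
      using Suc.prems by (intro has_derivative_add) (auto intro: frechet_derivative_works[THEN iffD1])
    then show "frechet_derivative f (at q) v + frechet_derivative h (at q) v = frechet_derivative (\<lambda>p. f p + h p) (at q) v"
      by (metis frechet_derivative_at)
  qed
  then show ?case using d by simp
qed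

lemma Ck_bilin:
  assumes "open U" "bounded_bilinear pr"
  shows "Ck k U f \<Longrightarrow> Ck k U h \<Longrightarrow> Ck k U (\<lambda>p. pr (f p) (h p))"
proof (induction k arbitrary: f h)
  case 0 then show ?case using bounded_bilinear.continuous_on[OF assms(2)] by simp
next
  case (Suc k)
  have der: "((\<lambda>p. pr (f p) (h p)) has_derivative
     (\<lambda>v. pr (f q) (frechet_derivative h (at q) v) + pr (frechet_derivative f (at q) v) (h q))) (at q)"
    if "q \<in> U" for q
    using Suc.prems that by (intro bounded_bilinear.FDERIV[OF assms(2)]) (auto intro: frechet_derivative_works[THEN iffD1])
  have d: "\<forall>p\<in>U. (\<lambda>p. pr (f p) (h p)) differentiable (at p)"
    using der unfolding differentiable_def by blast
  have "Ck k U (\<lambda>p. frechet_derivative (\<lambda>p. pr (f p) (h p)) (at p) v)" for v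
  proof (rule Ck_cong[OF assms(1), of "\<lambda>p. pr (f p) (frechet_derivative h (at p) v) + pr (frechet_derivative f (at p) v) (h p)"])
    show "Ck k U (\<lambda>p. pr (f p) (frechet_derivative h (at p) v) + pr (frechet_derivative f (at p) v) (h p))"
    proof (rule Ck_add[OF assms(1)])
      have "Ck k U f" "Ck k U h" using Suc.prems Ck_Suc_imp by blast+
      moreover have "Ck k U (\<lambda>p. frechet_derivative h (at p) v)" "Ck k U (\<lambda>p. frechet_derivative f (at p) v)"
        using Suc.prems by auto
      ultimately show "Ck k U (\<lambda>p. pr (f p) (frechet_derivative h (at p) v))"
        "Ck k U (\<lambda>p. pr (frechet_derivative f (at p) v) (h p))" using Suc.IH by blast+
    qed
    fix q assume q: "q \<in> U"
    show "pr (f q) (frechet_derivative h (at q) v) + pr (frechet_derivative f (at q) v) (h q) = frechet_derivative (\<lambda>p. pr (f p) (h p)) (at q) v"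
      using der[OF q] by (metis frechet_derivative_at)
  qed
  then show ?case using d by simp
qed

lemma Ck_sum:
  assumes "open U" "finite S"
  shows "(\<And>i. i \<in> S \<Longrightarrow> Ck k U (f i)) \<Longrightarrow> Ck k U (\<lambda>p. \<Sum>i\<in>S. f i p)"
  using assms(2)
proof (induction S rule: finite_induct)
  case empty then show ?case by (simp add: Ck_const)
next
  case (insert x F)
  then show ?case by (simp add: Ck_add[OF assms(1)])
qed

lemma sm_const: "smooth_on U (\<lambda>_. c)" by (simp add: smooth_on_def Ck_const)
lemma sm_add: "open U \<Longrightarrow> smooth_on U f \<Longrightarrow> smooth_on U h \<Longrightarrow> smooth_on U (\<lambda>p. f p + h p)"
  by (simp add: smooth_on_def Ck_add)
lemma sm_bilin: "open U \<Longrightarrow> bounded_bilinear pr \<Longrightarrow> smooth_on U f \<Longrightarrow> smooth_on U h \<Longrightarrow> smooth_on U (\<lambda>p. pr (f p) (h p))"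
  by (simp add: smooth_on_def Ck_bilin)
lemma sm_sum: "open U \<Longrightarrow> finite S \<Longrightarrow> (\<And>i. i \<in> S \<Longrightarrow> smooth_on U (f i)) \<Longrightarrow> smooth_on U (\<lambda>p. \<Sum>i\<in>S. f i p)"
  by (simp add: smooth_on_def Ck_sum)
lemma sm_cong: "open U \<Longrightarrow> (\<And>q. q \<in> U \<Longrightarrow> f q = h q) \<Longrightarrow> smooth_on U f \<Longrightarrow> smooth_on U h"
  by (meson Ck_cong smooth_on_def)
lemma sm_diff: "smooth_on U f \<Longrightarrow> p \<in> U \<Longrightarrow> f differentiable (at p)"
  unfolding smooth_on_def by (metis Ck.simps(2))

lemma lin_repr: "linear f \<Longrightarrow> f x = (\<Sum>i\<in>Basis. (x \<bullet> i) *\<^sub>R f i)"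
  by (metis (no_types, lifting) euclidean_representation linear_scale linear_sum sum.cong)

lemma sm_lin_app:
  fixes A :: "'a::euclidean_space \<Rightarrow> 'a \<Rightarrow> 'b::real_normed_vector"
  assumes "open U" "\<And>v. smooth_on U (\<lambda>p. A p v)" "\<And>p. p \<in> U \<Longrightarrow> linear (A p)" "smooth_on U Y"
  shows "smooth_on U (\<lambda>p. A p (Y p))"
proof (rule sm_cong[OF assms(1), of "\<lambda>p. \<Sum>i\<in>Basis. (Y p \<bullet> i) *\<^sub>R A p i"])
  show "smooth_on U (\<lambda>p. \<Sum>i\<in>Basis. (Y p \<bullet> i) *\<^sub>R A p i)"
    using assms by (intro sm_sum sm_bilin[OF _ bounded_bilinear_scaleR] sm_bilin[OF _ bounded_bilinear_inner] sm_const) auto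
  show "\<And>q. q \<in> U \<Longrightarrow> (\<Sum>i\<in>Basis. (Y q \<bullet> i) *\<^sub>R A q i) = A q (Y q)"
    using assms(3) lin_repr by metis
qed



theorem mainTheorem9:
  fixes U :: "'a::euclidean_space set" and n :: nat
    and phi :: "'a \<Rightarrow> 'a \<Rightarrow> 'a" and xi :: "'a \<Rightarrow> 'a" and eta :: "'a \<Rightarrow> 'a \<Rightarrow> real"
    and g :: "'a \<Rightarrow> 'a \<Rightarrow> 'a \<Rightarrow> real"
    and nabla :: "('a \<Rightarrow> 'a) \<Rightarrow> ('a \<Rightarrow> 'a) \<Rightarrow> ('a \<Rightarrow> 'a)"
    and a b c lam mu nu :: real
  assumes "DIM('a) = 2 * n + 1"
    and "apapR U phi xi eta g"
    and "levi_civita U g nabla"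
    and "para_einstein_like U phi xi eta g nabla a b c"
    and "para_ricci_like_soliton U phi xi eta g nabla lam mu nu"
  shows "a + b + c = - lam - mu - nu
    \<and> (\<forall>p\<in>U. nabla xi xi p = 0)
    \<and> (\<forall>p\<in>U. nabla_phi nabla phi xi xi p = 0)
    \<and> (\<forall>Y. smooth_on U Y \<longrightarrow> (\<forall>p\<in>U. nabla_eta nabla eta xi Y p = 0))
    \<and> (\<forall>Z. smooth_on U Z \<longrightarrow> (\<forall>p\<in>U. omega nabla phi xi g Z p = 0))
    \<and> (\<forall>Y Z. smooth_on U Y \<and> smooth_on U Z \<longrightarrow>
           (\<forall>p\<in>U. nabla_ricci nabla xi Y Z p = b * g p (nabla_phi nabla phi xi Y p) (Z p)))"
proof -
  note ap = assms(2)[unfolded apapR_def]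
  have op: "open U" and ne: "U \<noteq> {}" and sxi: "smooth_on U xi"
    and sphi: "\<And>v. smooth_on U (\<lambda>p. phi p v)" and seta: "\<And>v. smooth_on U (\<lambda>p. eta p v)"
    using ap by auto
  have lphi: "\<And>p. p \<in> U \<Longrightarrow> linear (phi p)" and leta: "\<And>p. p \<in> U \<Longrightarrow> linear (eta p)"
    and pxi: "\<And>p. p \<in> U \<Longrightarrow> phi p (xi p) = 0"
    and pp: "\<And>p v. p \<in> U \<Longrightarrow> phi p (phi p v) = v - eta p v *\<^sub>R xi p"
    and ep: "\<And>p v. p \<in> U \<Longrightarrow> eta p (phi p v) = 0"
    and ex: "\<And>p. p \<in> U \<Longrightarrow> eta p (xi p) = 1"
    and gphi: "\<And>p u v. p \<in> U \<Longrightarrow> g p (phi p u) (phi p v) = g p u v - eta p u * eta p v"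
    using ap by auto
  have gb: "\<And>p. p \<in> U \<Longrightarrow> bilinear (g p)" and gs: "\<And>p u v. p \<in> U \<Longrightarrow> g p u v = g p v u"
    and gpos: "\<And>p v. p \<in> U \<Longrightarrow> v \<noteq> 0 \<Longrightarrow> g p v v > 0"
    and gsm: "\<And>u v. smooth_on U (\<lambda>p. g p u v)"
    using ap unfolding riem_metric_def by auto
  note LC = assms(3)[unfolded levi_civita_def]
  have LCs: "\<And>X Y. smooth_on U X \<Longrightarrow> smooth_on U Y \<Longrightarrow> smooth_on U (nabla X Y)"
    using LC by blast
  have LCt: "\<And>X Y p. smooth_on U X \<Longrightarrow> smooth_on U Y \<Longrightarrow> p \<in> U \<Longrightarrow> nabla X Y p - nabla Y X p = lie X Y p"
    using LC by blast
  have LCm: "\<And>X Y Z p. smooth_on U X \<Longrightarrow> smooth_on U Y \<Longrightarrow> smooth_on U Z \<Longrightarrow> p \<in> U \<Longrightarrow>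
     vderiv X (\<lambda>q. g q (Y q) (Z q)) p = g p (nabla X Y p) (Z p) + g p (Y p) (nabla X Z p)"
    using LC by blast
  have g0l: "\<And>p v. p \<in> U \<Longrightarrow> g p 0 v = 0" using gb bilinear_lzero by blast
  have g0r: "\<And>p v. p \<in> U \<Longrightarrow> g p v 0 = 0" using gb bilinear_rzero by blast
  have sphiY: "\<And>Y. smooth_on U Y \<Longrightarrow> smooth_on U (\<lambda>q. phi q (Y q))"
    using sm_lin_app[OF op sphi lphi] by blast
  have setaY: "\<And>Y. smooth_on U Y \<Longrightarrow> smooth_on U (\<lambda>q. eta q (Y q))"
    using sm_lin_app[OF op seta leta] by blast
  have gsmYZ: "smooth_on U (\<lambda>q. g q (Y q) (Z q))" if sY: "smooth_on U Y" and sZ: "smooth_on U Z" for Y Z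
  proof -
    have "smooth_on U (\<lambda>q. g q v (Z q))" for v
      by (rule sm_lin_app[OF op gsm _ sZ]) (use gb in \<open>auto simp: bilinear_def\<close>)
    then show ?thesis
      by (rule sm_lin_app[OF op _ _ sY, of "\<lambda>p u. g p u (Z p)"]) (use gb in \<open>auto simp: bilinear_def\<close>)
  qed
  have A1: "\<And>p v. p \<in> U \<Longrightarrow> g p (xi p) v = eta p v"
  proof -
    fix p v assume p: "p \<in> U"
    have "g p (phi p (xi p)) (phi p v) = g p (xi p) v - eta p (xi p) * eta p v" by (rule gphi[OF p])
    then show "g p (xi p) v = eta p v" using pxi[OF p] g0l[OF p] ex[OF p] by simp
  qed
  have A2: "\<And>p. p \<in> U \<Longrightarrow> g p (xi p) (xi p) = 1" using A1 ex by simp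
  have A3: "g p (phi p u) v = g p u (phi p v)" if p: "p \<in> U" for p u v
  proof -
    have e: "phi p (phi p v) + eta p v *\<^sub>R xi p = v" using pp[OF p] by simp
    have "g p (phi p u) v = g p (phi p u) (phi p (phi p v) + eta p v *\<^sub>R xi p)" by (simp only: e)
    also have "\<dots> = g p (phi p u) (phi p (phi p v)) + eta p v * g p (phi p u) (xi p)"
      using bilinear_radd[OF gb[OF p]] bilinear_rmul[OF gb[OF p]] by simp
    also have "\<dots> = g p u (phi p v)"
      using gphi[OF p, of u "phi p v"] gs[OF p, of "phi p u" "xi p"] A1[OF p, of "phi p u"] ep[OF p] by simp
    finally show ?thesis .
  qed
  have gtxi: "\<And>p v. p \<in> U \<Longrightarrow> gtilde phi eta g p (xi p) v = eta p v"
    unfolding gtilde_def using A1 ep ex by simp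
  have sep: "x = 0" if p: "p \<in> U" and h: "\<And>Z. smooth_on U Z \<Longrightarrow> g p x (Z p) = 0" for p x
  proof -
    have "g p x x = 0" using h[OF sm_const[of U x]] by simp
    then show ?thesis using gpos[OF p, of x] by (cases "x = 0") auto
  qed
  have vd_cong: "vderiv X f p = vderiv X h p" if "p \<in> U" "\<And>q. q \<in> U \<Longrightarrow> f q = h q" for X f h p
  proof -
    have "frechet_derivative f (at p) = frechet_derivative h (at p)" by (rule fd_cong[OF op that])
    then show ?thesis by (simp add: vderiv_def)
  qed
  have vd_const: "vderiv X f p = 0" if "p \<in> U" "\<And>q. q \<in> U \<Longrightarrow> f q = c" for X f p and c :: real
  proof -
    have "vderiv X f p = vderiv X (\<lambda>_. c) p" by (rule vd_cong[OF that(1)]) (simp add: that(2))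
    moreover have "frechet_derivative (\<lambda>_. c) (at p) = (\<lambda>_. 0)"
      by (rule frechet_derivative_at[symmetric]) (rule has_derivative_const)
    ultimately show ?thesis by (simp add: vderiv_def)
  qed
  have lie_self: "\<And>X p. lie X X p = 0" by (simp add: lie_def)
  note E = assms(4)[unfolded para_einstein_like_def, rule_format]
  note S = assms(5)[unfolded para_ricci_like_soliton_def, rule_format]
  obtain p0 where p0: "p0 \<in> U" using ne by blast
  have L0: "lie_g g xi xi xi p0 = 0"
    unfolding lie_g_def lie_self using vd_const[OF p0, of "\<lambda>q. g q (xi q) (xi q)" 1] A2 g0l g0r p0 by simp
  have i: "a + b + c = - lam - mu - nu"
    using E[OF conjI[OF sxi sxi] p0] S[OF conjI[OF sxi sxi] p0] L0 A2[OF p0] gtxi[OF p0] ex[OF p0] by simp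
  have lieg0: "lie_g g xi xi Z p = 0" if sZ: "smooth_on U Z" and p: "p \<in> U" for Z :: "'a \<Rightarrow> 'a" and p
  proof -
    have "ricci nabla xi Z p = (a + b + c) * eta p (Z p)"
      using E[OF conjI[OF sxi sZ] p] A1[OF p] gtxi[OF p] ex[OF p] by (simp add: algebra_simps)
    moreover have "ricci nabla xi Z p = - (1/2) * lie_g g xi xi Z p - (lam + mu + nu) * eta p (Z p)"
      using S[OF conjI[OF sxi sZ] p] A1[OF p] gtxi[OF p] ex[OF p] by (simp add: algebra_simps)
    ultimately have "- (1/2) * lie_g g xi xi Z p = (a + b + c + lam + mu + nu) * eta p (Z p)"
      by (simp add: algebra_simps)
    moreover have "a + b + c + lam + mu + nu = 0" using i by simp
    ultimately show ?thesis by simp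
  qed
  have nxx: "nabla xi xi p = 0" if p: "p \<in> U" for p
  proof (rule sep[OF p])
    fix Z :: "'a \<Rightarrow> 'a" assume sZ: "smooth_on U Z"
    have 1: "lie_g g xi xi Z p = g p (nabla xi xi p) (Z p) + g p (xi p) (nabla Z xi p)"
      unfolding lie_g_def lie_self
      using LCm[OF sxi sxi sZ p] LCt[OF sxi sZ p, symmetric] g0l[OF p] gb[OF p]
      by (simp add: bilinear_rsub)
    have "vderiv Z (\<lambda>q. g q (xi q) (xi q)) p = 0" by (rule vd_const[OF p]) (rule A2)
    then have "g p (xi p) (nabla Z xi p) = 0"
      using LCm[OF sZ sxi sxi p] gs[OF p] by simp
    then show "g p (nabla xi xi p) (Z p) = 0" using 1 lieg0[OF sZ p] by simp
  qed
  have nphi: "nabla_phi nabla phi xi xi p = 0" if p: "p \<in> U" for p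
  proof -
    have "nabla xi (\<lambda>q. phi q (xi q)) p = 0"
    proof (rule sep[OF p])
      fix Z :: "'a \<Rightarrow> 'a" assume sZ: "smooth_on U Z"
      have "vderiv xi (\<lambda>q. g q (phi q (xi q)) (Z q)) p = 0"
        by (rule vd_const[OF p]) (simp add: pxi g0l)
      then show "g p (nabla xi (\<lambda>q. phi q (xi q)) p) (Z p) = 0"
        using LCm[OF sxi sphiY[OF sxi] sZ p] pxi[OF p] g0l[OF p] by simp
    qed
    then show ?thesis unfolding nabla_phi_def using nxx[OF p] lphi[OF p] linear_0 by auto
  qed
  have neta: "nabla_eta nabla eta xi Y p = 0" if sY: "smooth_on U Y" and p: "p \<in> U" for Y p
  proof -
    have "vderiv xi (\<lambda>q. eta q (Y q)) p = vderiv xi (\<lambda>q. g q (xi q) (Y q)) p"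
      by (rule vd_cong[OF p]) (simp add: A1)
    also have "\<dots> = eta p (nabla xi Y p)"
      using LCm[OF sxi sxi sY p] nxx[OF p] g0l[OF p] A1[OF p] by simp
    finally show ?thesis unfolding nabla_eta_def by simp
  qed
  have om: "omega nabla phi xi g Z p = 0" if "p \<in> U" for Z p
    unfolding omega_def Ften_def using nphi[OF that] g0l[OF that] by simp
  have ricE: "ricci nabla Y Z q = a * g q (Y q) (Z q) + b * g q (phi q (Y q)) (Z q) + (b + c) * (eta q (Y q) * eta q (Z q))"
    if "smooth_on U Y" "smooth_on U Z" "q \<in> U" for Y Z q
    using E[OF conjI[OF that(1,2)] that(3)] A3[OF that(3)] unfolding gtilde_def by (simp add: algebra_simps)
  have iv: "nabla_ricci nabla xi Y Z p = b * g p (nabla_phi nabla phi xi Y p) (Z p)"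
    if sY: "smooth_on U Y" and sZ: "smooth_on U Z" and p: "p \<in> U" for Y Z p
  proof -
    define G1 where "G1 = (\<lambda>q. g q (Y q) (Z q))"
    define G2 where "G2 = (\<lambda>q. g q (phi q (Y q)) (Z q))"
    define G4 where "G4 = (\<lambda>q. eta q (Y q))"
    define G5 where "G5 = (\<lambda>q. eta q (Z q))"
    define F where "F = (\<lambda>q. a * G1 q + b * G2 q + (b + c) * (G4 q * G5 q))"
    have sY': "smooth_on U (nabla xi Y)" and sZ': "smooth_on U (nabla xi Z)" using LCs sxi sY sZ by auto
    have d1: "G1 differentiable (at p)" unfolding G1_def by (rule sm_diff[OF gsmYZ[OF sY sZ] p])
    have d2: "G2 differentiable (at p)" unfolding G2_def by (rule sm_diff[OF gsmYZ[OF sphiY[OF sY] sZ] p])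
    have d4: "G4 differentiable (at p)" unfolding G4_def by (rule sm_diff[OF setaY[OF sY] p])
    have d5: "G5 differentiable (at p)" unfolding G5_def by (rule sm_diff[OF setaY[OF sZ] p])
    have "(F has_derivative (\<lambda>v. a * frechet_derivative G1 (at p) v + b * frechet_derivative G2 (at p) v
       + (b + c) * (G4 p * frechet_derivative G5 (at p) v + frechet_derivative G4 (at p) v * G5 p))) (at p)"
      unfolding F_def using d1 d2 d4 d5 frechet_derivative_works
      by (auto intro!: derivative_eq_intros)
    then have DF: "vderiv xi F p = a * vderiv xi G1 p + b * vderiv xi G2 p
       + (b + c) * (G4 p * vderiv xi G5 p + vderiv xi G4 p * G5 p)"
      unfolding vderiv_def by (simp add: frechet_derivative_at[symmetric])
    have "vderiv xi (ricci nabla Y Z) p = vderiv xi F p"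
      by (rule vd_cong[OF p]) (simp add: ricE[OF sY sZ] F_def G1_def G2_def G4_def G5_def)
    moreover have "vderiv xi G1 p = g p (nabla xi Y p) (Z p) + g p (Y p) (nabla xi Z p)"
      unfolding G1_def by (rule LCm[OF sxi sY sZ p])
    moreover have "vderiv xi G2 p = g p (nabla xi (\<lambda>q. phi q (Y q)) p) (Z p) + g p (phi p (Y p)) (nabla xi Z p)"
      unfolding G2_def by (rule LCm[OF sxi sphiY[OF sY] sZ p])
    moreover have "vderiv xi G4 p = eta p (nabla xi Y p)"
      using neta[OF sY p] unfolding nabla_eta_def G4_def by simp
    moreover have "vderiv xi G5 p = eta p (nabla xi Z p)"
      using neta[OF sZ p] unfolding nabla_eta_def G5_def by simp
    moreover have "ricci nabla (nabla xi Y) Z p = a * g p (nabla xi Y p) (Z p) + b * g p (phi p (nabla xi Y p)) (Z p) + (b + c) * (eta p (nabla xi Y p) * eta p (Z p))"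
      by (rule ricE[OF sY' sZ p])
    moreover have "ricci nabla Y (nabla xi Z) p = a * g p (Y p) (nabla xi Z p) + b * g p (phi p (Y p)) (nabla xi Z p) + (b + c) * (eta p (Y p) * eta p (nabla xi Z p))"
      by (rule ricE[OF sY sZ' p])
    moreover have "b * g p (nabla_phi nabla phi xi Y p) (Z p) = b * g p (nabla xi (\<lambda>q. phi q (Y q)) p) (Z p) - b * g p (phi p (nabla xi Y p)) (Z p)"
      unfolding nabla_phi_def using gb[OF p] by (simp add: bilinear_lsub right_diff_distrib)
    ultimately show ?thesis unfolding nabla_ricci_def DF G4_def G5_def by (simp add: algebra_simps del: mult.commute)
  qed
  show ?thesis
  proof (intro conjI allI impI ballI)
    show "a + b + c = - lam - mu - nu" by (rule i)
    show "\<And>p. p \<in> U \<Longrightarrow> nabla xi xi p = 0" by (rule nxx)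
    show "\<And>p. p \<in> U \<Longrightarrow> nabla_phi nabla phi xi xi p = 0" by (rule nphi)
    show "\<And>Y p. smooth_on U Y \<Longrightarrow> p \<in> U \<Longrightarrow> nabla_eta nabla eta xi Y p = 0" by (rule neta)
    show "\<And>Z p. smooth_on U Z \<Longrightarrow> p \<in> U \<Longrightarrow> omega nabla phi xi g Z p = 0" by (rule om)
    show "\<And>Y Z p. smooth_on U Y \<and> smooth_on U Z \<Longrightarrow> p \<in> U \<Longrightarrow>
       nabla_ricci nabla xi Y Z p = b * g p (nabla_phi nabla phi xi Y p) (Z p)"
      using iv by blast
  qed
qed

end
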